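(* Let $T^4=\mathbb{R}^4/\mathbb{Z}^4$, and let $G$ be a constant Riemannian metric and $B$ a constant real 2-form on $T^4$ with all components $G_{IJ},B_{IJ}\in\mathbb{Q}$ (i.e. the $\mathcal N=(1,1)$ SCFT for $(T^4;G,B)$ is rational). Let $I$ be a polarizable constant complex structure on $T^4$ with which $G$ is compatible and such that the Hodge $(2,0)$ component of the class of $B$ (with respect to $I$) vanishes. Then there exists a primitive subgroup $\Gamma_f\subset H_1(T^4;\mathbb{Z})$ of rank $2$ such that the T-dual along $\Gamma_f$ has a geometric SYZ-mirror; that is, $\omega|_{\Gamma_f\otimes\mathbb{R}}=0$ and $B|_{\Gamma_f\otimes\mathbb{R}}=0$.
   Context: Coordinates $X^I$ normalized so that $H_1(T^4;\mathbb{Z})=\mathbb{Z}^4$ and $2\pi\sqrt{\alpha'}=1$; $G=G_{IJ}dX^I\otimes dX^J$, $B=\frac12B_{IJ}dX^I\wedge dX^J$. Compatible: $G(Iu,Iv)=G(u,v)$. Polarizable: some $\psi\in H^2(T^4;\mathbb{Z})\cap H^{1,1}$ has $\psi(I\cdot,\cdot)$ positive definite. Kähler form: $\omega=\frac12\omega_{IJ}dX^I\wedge dX^J$, $\omega_{IJ}=I^K{}_IG_{KJ}$. For a rank-2 primitive $\Gamma_f\subset H_1(T^4;\mathbb{Z})$ (so $H_1(T^4;\mathbb{Z})=\Gamma_f\oplus\Gamma_b$ for some $\Gamma_b$), string-theoretic T-duality along the fibers $\Gamma_f\otimes\mathbb{R}/\Gamma_f$ maps the SCFT with its $\mathcal N=(2,2)$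 structure defined by $I$ to another torus SCFT; one says $(T^4;G,B;I)$ has a geometric SYZ-mirror along $\Gamma_f$ if the mirror $\mathcal N=(2,2)$ currents come from a complex structure on the T-dual torus. By a known result this holds iff $\omega$ and $B$ restrict to zero on $\Gamma_f\otimes\mathbb{R}$ (2-forms evaluated on pairs of vectors in $\Gamma_f\otimes\mathbb{R}$). *)

theory Defs
  imports "HOL-Analysis.Analysis"
begin

text \<open>Constant tensors on T^4 = R^4/Z^4, in the coordinates X^I with H_1(T^4;Z) = Z^4.
  A matrix M :: real^4^4 represents the bilinear form (u,v) |-> u^I M_IJ v^J on tangent
  vectors (elements of real^4 = H_1(T^4;R)).\<close>

definition bilin :: "real^4^4 \<Rightarrow> real^4 \<Rightarrow> real^4 \<Rightarrow> real" where
  "bilin M u v = u \<bullet> (M *v v)"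

definition int_vecs :: "(real^4) set" where
  "int_vecs = {v. \<forall>i. v $ i \<in> \<int>}"

text \<open>Primitive subgroup of rank 2: Gamma_f is spanned over Z by the first two vectors of a
  Z-basis f_1,...,f_4 of Z^4 (integer vectors forming a unimodular matrix), so that
  Z^4 = Gamma_f (+) Gamma_b with Gamma_b spanned by f_3, f_4.\<close>
definition primitive_rank2 :: "(real^4) set \<Rightarrow> bool" where
  "primitive_rank2 \<Gamma> \<longleftrightarrow>
     (\<exists>f :: 4 \<Rightarrow> real^4. (\<forall>i. f i \<in> int_vecs) \<and> \<bar>det (\<chi> i. f i)\<bar> = 1 \<and>
        \<Gamma> = {of_int a *\<^sub>R f 1 + of_int b *\<^sub>R f 2 | a b. True})"

text \<open>Hodge components of a real 2-form beta: beta^{2,0}(u,v) = beta_C(pi^{1,0} u, pi^{1,0} v)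
  with pi^{1,0} = (1 - i I)/2, and beta^{0,2} similarly with pi^{0,1} = (1 + i I)/2,
  where beta_C is the complex-bilinear extension (written out below for real u, v,
  which span the complexification).\<close>
definition hodge20 :: "(real^4 \<Rightarrow> real^4 \<Rightarrow> real) \<Rightarrow> real^4^4 \<Rightarrow> real^4 \<Rightarrow> real^4 \<Rightarrow> complex" where
  "hodge20 \<beta> I u v =
     (complex_of_real (\<beta> u v - \<beta> (I *v u) (I *v v))
      - \<i> * complex_of_real (\<beta> u (I *v v) + \<beta> (I *v u) v)) / 4"

definition hodge02 :: "(real^4 \<Rightarrow> real^4 \<Rightarrow> real) \<Rightarrow> real^4^4 \<Rightarrow> real^4 \<Rightarrow> real^4 \<Rightarrow> complex" where
  "hodge02 \<beta> I u v =
     (complex_of_real (\<beta> u v - \<beta> (I *v u) (I *v v))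
      + \<i> * complex_of_real (\<beta> u (I *v v) + \<beta> (I *v u) v)) / 4"

definition is_11 :: "(real^4 \<Rightarrow> real^4 \<Rightarrow> real) \<Rightarrow> real^4^4 \<Rightarrow> bool" where
  "is_11 \<beta> I \<longleftrightarrow> (\<forall>u v. hodge20 \<beta> I u v = 0 \<and> hodge02 \<beta> I u v = 0)"

definition compatible :: "real^4^4 \<Rightarrow> real^4^4 \<Rightarrow> bool" where
  "compatible G I \<longleftrightarrow> (\<forall>u v. bilin G (I *v u) (I *v v) = bilin G u v)"

text \<open>Polarizable: some integral class psi in H^2(T^4;Z) of type (1,1) with psi(I.,.) positive
  definite.  Integral 2-forms are antisymmetric integer matrices psi_IJ
  (psi = 1/2 psi_IJ dX^I /\ dX^J).\<close>
definition polarizable :: "real^4^4 \<Rightarrow> bool" where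
  "polarizable I \<longleftrightarrow>
     (\<exists>\<psi> :: real^4^4. transpose \<psi> = - \<psi> \<and> (\<forall>i j. \<psi> $ i $ j \<in> \<int>) \<and>
        is_11 (bilin \<psi>) I \<and> (\<forall>u. u \<noteq> 0 \<longrightarrow> bilin \<psi> (I *v u) u > 0))"

text \<open>Kaehler form omega_IJ = I^K_I G_KJ, i.e. omega(u,v) = G(I u, v).\<close>
definition kahler :: "real^4^4 \<Rightarrow> real^4^4 \<Rightarrow> real^4^4" where
  "kahler G I = transpose I ** G"

end

theory Submission
  imports Defs
begin

definition Jm :: "real^4^4" where
  "Jm = (\<chi> i j. if i = 2 \<and> j = 1 then 1 else if i = 1 \<and> j = 2 then -1
             else if i = 4 \<and> j = 3 then 1 else if i = 3 \<and> j = 4 then -1 else 0)"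

definition mk :: "real \<Rightarrow> real \<Rightarrow> real \<Rightarrow> real \<Rightarrow> real^4^4" where
  "mk c t p q = (\<chi> i j.
     if i = 1 then (if j = 1 then 0 else if j = 2 then -c-t else if j = 3 then -p else -q)
     else if i = 2 then (if j = 1 then c+t else if j = 2 then 0 else if j = 3 then q else -p)
     else if i = 3 then (if j = 1 then p else if j = 2 then -q else if j = 3 then 0 else t-c)
     else (if j = 1 then q else if j = 2 then p else if j = 3 then c-t else 0))"

definition v4 :: "real \<Rightarrow> real \<Rightarrow> real \<Rightarrow> real \<Rightarrow> real^4" where
  "v4 a b c d = (\<chi> i. if i = 1 then a else if i = 2 then b else if i = 3 then c else d)"

lemma num4_neq [simp]: "(1::4) \<noteq> 2" "(1::4) \<noteq> 3" "(1::4) \<noteq> 4" "(2::4) \<noteq> 3" "(2::4) \<noteq> 4" "(3::4) \<noteq> 4"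
  "(2::4) \<noteq> 1" "(3::4) \<noteq> 1" "(4::4) \<noteq> 1" "(3::4) \<noteq> 2" "(4::4) \<noteq> 2" "(4::4) \<noteq> 3"
  by simp_all

lemma mat4_eq: "(A::real^4^4) = B \<longleftrightarrow>
  (A$1$1 = B$1$1 \<and> A$1$2 = B$1$2 \<and> A$1$3 = B$1$3 \<and> A$1$4 = B$1$4 \<and>
   A$2$1 = B$2$1 \<and> A$2$2 = B$2$2 \<and> A$2$3 = B$2$3 \<and> A$2$4 = B$2$4 \<and>
   A$3$1 = B$3$1 \<and> A$3$2 = B$3$2 \<and> A$3$3 = B$3$3 \<and> A$3$4 = B$3$4 \<and>
   A$4$1 = B$4$1 \<and> A$4$2 = B$4$2 \<and> A$4$3 = B$4$3 \<and> A$4$4 = B$4$4)"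
  by (simp add: vec_eq_iff forall_4)

lemma mmult4: "((A::real^4^4) ** B)$i$j = A$i$1*B$1$j + A$i$2*B$2$j + A$i$3*B$3$j + A$i$4*B$4$j"
  by (simp add: matrix_matrix_mult_def sum_4)

lemma mvmult4: "((A::real^4^4) *v x)$i = A$i$1*x$1 + A$i$2*x$2 + A$i$3*x$3 + A$i$4*x$4"
  by (simp add: matrix_vector_mult_def sum_4)

lemma inner4: "(x::real^4) \<bullet> y = x$1*y$1 + x$2*y$2 + x$3*y$3 + x$4*y$4"
  by (simp add: inner_vec_def sum_4)

lemma trace4: "trace (A::real^4^4) = A$1$1 + A$2$2 + A$3$3 + A$4$4"
  by (simp add: trace_def sum_4)

lemma model_JJ: "Jm ** Jm = - mat 1"
  by (simp add: mat4_eq mmult4 Jm_def mat_def)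

lemma model_mk_J: "mk c t p q ** Jm = Jm ** mk c t p q"
  by (simp add: mat4_eq mmult4 Jm_def mk_def)

lemma model_inv: "mk c t p q ** mk c (-t) (-p) (-q) = (t^2+p^2+q^2 - c^2) *\<^sub>R mat 1"
  by (simp add: mat4_eq mmult4 mk_def mat_def power2_eq_square algebra_simps)

lemma model_sum: "mk c t p q + mk c (-t) (-p) (-q) = (2*c) *\<^sub>R Jm"
  by (simp add: mat4_eq mk_def Jm_def)

lemma model_form:
  assumes sk: "transpose X = - X" and cm: "X ** Jm = Jm ** X"
  shows "X = mk (-(X$1$2 + X$3$4)/2) ((X$3$4 - X$1$2)/2) (-X$1$3) (-X$1$4)"
proof -
  from sk have s: "\<And>i j. X$j$i = - X$i$j"
    by (metis (no_types, lifting) transpose_def vec_lambda_beta vector_uminus_component)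
  from cm have c: "\<And>i j. (X ** Jm)$i$j = (Jm ** X)$i$j" by simp
  note cc = c[unfolded mmult4, of 1 1] c[unfolded mmult4, of 1 2] c[unfolded mmult4, of 1 3] c[unfolded mmult4, of 1 4]
     c[unfolded mmult4, of 2 3] c[unfolded mmult4, of 2 4] c[unfolded mmult4, of 3 3] c[unfolded mmult4, of 3 4]
  have d: "X$i$i = 0" for i using s[of i i] by simp
  show ?thesis
    using cc d s[of 1 2] s[of 1 3] s[of 1 4] s[of 2 3] s[of 2 4] s[of 3 4]
    by (simp add: mat4_eq mk_def Jm_def) (simp add: field_simps)
qed

lemma model_K:
  "mk d r1 r2 r3 ** (mk c t p q ** mk d r1 r2 r3 - mk d r1 r2 r3 ** mk c t p q)
     - (mk c t p q ** mk d r1 r2 r3 - mk d r1 r2 r3 ** mk c t p q) ** mk d r1 r2 r3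
     - (4*(r1^2+r2^2+r3^2)) *\<^sub>R mk c t p q
     + (4*(t*r1+p*r2+q*r3)) *\<^sub>R mk d r1 r2 r3 = (4*((t*r1+p*r2+q*r3)*d - (r1^2+r2^2+r3^2)*c)) *\<^sub>R Jm"
  by (simp add: mat4_eq mmult4 mk_def Jm_def power2_eq_square) (simp add: algebra_simps)

lemma model_trJ: "trace (Jm ** mk c t p q) = -4*c"
  by (simp add: trace4 mmult4 mk_def Jm_def)

lemma model_tr2: "trace (mk c t p q ** mk c t p q) = -4*(c^2 + (t^2+p^2+q^2))"
  by (simp add: trace4 mmult4 mk_def power2_eq_square) (simp add: algebra_simps)

lemma model_Q: "(Jm *v x) \<bullet> (mk c t p q *v x) =
   (c+t)*(x$1^2+x$2^2) + (c-t)*(x$3^2+x$4^2) + 2*q*(x$1*x$3+x$2*x$4) + 2*p*(x$2*x$3 - x$1*x$4)"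
  by (simp add: inner4 mvmult4 mk_def Jm_def power2_eq_square) (simp add: algebra_simps)

lemma model_pos:
  assumes pos: "\<And>x. x \<noteq> 0 \<Longrightarrow> (Jm *v x) \<bullet> (mk c t p q *v x) > 0"
  shows "c > 0 \<and> c^2 > t^2+p^2+q^2"
proof -
  have "v4 1 0 0 0 \<noteq> 0" by (simp add: vec_eq_iff v4_def forall_4)
  from pos[OF this] have 1: "c + t > 0" by (simp add: model_Q v4_def)
  have "v4 0 0 1 0 \<noteq> 0" by (simp add: vec_eq_iff v4_def forall_4)
  from pos[OF this] have 2: "c - t > 0" by (simp add: model_Q v4_def)
  have c0: "c > 0" using 1 2 by simp
  have "c^2 > t^2+p^2+q^2"
  proof (cases "p^2+q^2 = 0")
    case True
    hence "p = 0" "q = 0" by (simp_all add: sum_power2_eq_zero_iff)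
    moreover have "(c+t)*(c-t) > 0" using 1 2 by simp
    ultimately show ?thesis by (simp add: power2_eq_square algebra_simps)
  next
    case False
    let ?x = "v4 (p^2+q^2) 0 (-q*(c+t)) (p*(c+t))"
    have "?x \<noteq> 0" using False by (simp add: vec_eq_iff v4_def forall_4) blast
    from pos[OF this] have "(p^2+q^2)*(c+t)*((c-t)*(c+t) - (p^2+q^2)) > 0"
      by (simp add: model_Q v4_def power2_eq_square) (simp add: algebra_simps)
    moreover have "(p^2+q^2) > 0" using False by (metis add_nonneg_nonneg less_eq_real_def zero_le_power2)
    ultimately have "(c-t)*(c+t) - (p^2+q^2) > 0" using 1
      by (metis mult_pos_pos zero_less_mult_pos)
    then show ?thesis by (simp add: power2_eq_square algebra_simps)
  qed
  with c0 show ?thesis by simp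
qed

section \<open>Bilinear forms and matrices\<close>

lemma mv_inner_transpose: "(A *v u) \<bullet> (w::real^'n) = u \<bullet> (transpose A *v w)"
  by (metis dot_lmul_matrix inner_commute transpose_matrix_vector)

lemma bilin_axis: "bilin M (axis i 1) (axis j 1) = M$i$j"
  by (simp add: bilin_def matrix_vector_mult_basis inner_axis' column_def)

lemma bilin_eq_mat: "(\<And>u v. bilin M u v = bilin N u v) \<Longrightarrow> M = N"
  by (metis bilin_axis vec_eq_iff)

lemma bilin_conj: "bilin M (A *v u) (A *v v) = bilin (transpose A ** M ** A) u v"
  by (simp add: bilin_def mv_inner_transpose matrix_vector_mul_assoc matrix_mul_assoc)

lemma neg_mat1_mv: "(- mat 1) *v (x::real^4) = - x"
  by (simp add: vec_eq_iff mvmult4 mat_def forall_4)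

definition colmat :: "(4 \<Rightarrow> real^4) \<Rightarrow> real^4^4" where
  "colmat E = (\<chi> i j. E j $ i)"

lemma colmat_gram: "(transpose (colmat E) ** M ** colmat E)$i$j = E i \<bullet> (M *v E j)"
  by (simp add: mmult4 mvmult4 inner4 colmat_def transpose_def) (simp add: algebra_simps)

lemma colmat_left: "((M::real^4^4) ** colmat E)$i$j = (M *v E j)$i"
  by (simp add: mmult4 mvmult4 colmat_def)

lemma adapted_basis:
  fixes G I :: "real^4^4"
  assumes Gs: "transpose G = G" and Gp: "\<forall>u. u \<noteq> 0 \<longrightarrow> bilin G u u > 0"
    and II: "I ** I = - mat 1" and GI: "transpose I ** G ** I = G"
  shows "\<exists>P. transpose P ** G ** P = mat 1 \<and> I ** P = P ** Jm"
proof -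
  define g where "g u v = u \<bullet> (G *v v)" for u v
  have gsym: "g u v = g v u" for u v
    unfolding g_def by (metis Gs inner_commute mv_inner_transpose)
  have gI: "g (I *v u) (I *v v) = g u v" for u v
    using bilin_conj[of G I u v] GI by (simp add: g_def bilin_def)
  have IIv: "I *v (I *v u) = - u" for u
    by (simp add: matrix_vector_mul_assoc II neg_mat1_mv)
  have gIl: "g (I *v u) v = - g u (I *v v)" for u v
    using gI[of "I *v u" v] by (simp add: IIv g_def)
  have gII: "g u (I *v u) = 0" for u
    using gIl[of u u] gsym[of u "I *v u"] by simp
  have gpos: "u \<noteq> 0 \<Longrightarrow> g u u > 0" for u using Gp by (simp add: g_def bilin_def)
  have gscale: "g (a *\<^sub>R u) (b *\<^sub>R v) = a * b * g u v" for a b u v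
    by (simp add: g_def matrix_vector_mult_scaleR)
  have gscr: "g u (b *\<^sub>R v) = b * g u v" for b u v
    by (simp add: g_def matrix_vector_mult_scaleR)
  define x1 :: "real^4" where "x1 = axis 1 1"
  have x1: "x1 \<noteq> 0" by (simp add: x1_def)
  define e1 where "e1 = (1 / sqrt (g x1 x1)) *\<^sub>R x1"
  have e1n: "g e1 e1 = 1"
    using gpos[OF x1] by (simp add: e1_def gscale)
  define e2 where "e2 = I *v e1"
  obtain y :: "real^4" where y: "y \<noteq> 0" "\<And>z. z \<in> span {G *v e1, G *v e2} \<Longrightarrow> orthogonal y z"
  proof -
    have "dim {G *v e1, G *v e2} \<le> card {G *v e1, G *v e2}" by (rule dim_le_card') simp
    also have "\<dots> \<le> 2" by (simp add: card_insert_le_m1)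
    finally have "dim {G *v e1, G *v e2} < DIM(real^4)" by simp
    then show ?thesis using orthogonal_to_subspace_exists that by blast
  qed
  have ye1: "g e1 y = 0"
    using y(2)[of "G *v e1"] by (simp add: span_base orthogonal_def g_def) (metis gsym g_def)
  have ye2: "g e2 y = 0"
    using y(2)[of "G *v e2"] by (simp add: span_base orthogonal_def g_def) (metis gsym g_def)
  define e3 where "e3 = (1 / sqrt (g y y)) *\<^sub>R y"
  have e3n: "g e3 e3 = 1"
    using gpos[OF y(1)] by (simp add: e3_def gscale)
  have e13: "g e1 e3 = 0" by (simp add: e3_def gscr ye1)
  have e23: "g e2 e3 = 0" by (simp add: e3_def gscr ye2)
  define e4 where "e4 = I *v e3"
  have e12: "g e1 e2 = 0" by (simp add: e2_def gII)
  have e22: "g e2 e2 = 1" by (simp add: e2_def gI e1n)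
  have e44: "g e4 e4 = 1" by (simp add: e4_def gI e3n)
  have e34: "g e3 e4 = 0" by (simp add: e4_def gII)
  have e14: "g e1 e4 = 0" using gIl[of e1 e3] e23 by (simp add: e4_def e2_def)
  have e24: "g e2 e4 = 0" by (simp add: e2_def e4_def gI e13)
  define E :: "4 \<Rightarrow> real^4" where "E j = (if j = 1 then e1 else if j = 2 then e2 else if j = 3 then e3 else e4)" for j
  define P where "P = colmat E"
  have "transpose P ** G ** P = mat 1"
    unfolding P_def mat4_eq colmat_gram
    using e1n e22 e3n e44 e12 e13 e14 e23 e24 e34
    by (simp add: E_def mat_def g_def[symmetric] gsym[of e2 e1] gsym[of e3 e1] gsym[of e4 e1]
        gsym[of e3 e2] gsym[of e4 e2] gsym[of e4 e3])
  moreover have "I ** P = P ** Jm"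
  proof -
    have a: "I *v e2 = - e1" by (simp add: e2_def IIv)
    have b: "I *v e4 = - e3" by (simp add: e4_def IIv)
    show ?thesis
      unfolding P_def mat4_eq colmat_left
      by (simp add: mmult4 colmat_def Jm_def E_def a b e2_def[symmetric] e4_def[symmetric])
  qed
  ultimately show ?thesis by blast
qed

section \<open>Rational matrices\<close>

definition Qm :: "real^'n^'m \<Rightarrow> bool" where
  "Qm M \<longleftrightarrow> (\<forall>i j. M$i$j \<in> \<rat>)"

lemma Qm_mult: "Qm A \<Longrightarrow> Qm B \<Longrightarrow> Qm (A ** B)"
  unfolding Qm_def matrix_matrix_mult_def by (auto intro!: Rats_sum Rats_mult)

lemma Qm_add: "Qm A \<Longrightarrow> Qm B \<Longrightarrow> Qm (A + B)"
  unfolding Qm_def by simp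

lemma Qm_diff: "Qm A \<Longrightarrow> Qm B \<Longrightarrow> Qm (A - B)"
  unfolding Qm_def by simp

lemma Qm_scale: "r \<in> \<rat> \<Longrightarrow> Qm A \<Longrightarrow> Qm (r *\<^sub>R A)"
  unfolding Qm_def by simp

lemma Qm_transpose: "Qm A \<Longrightarrow> Qm (transpose A)"
  unfolding Qm_def transpose_def by simp

lemma trace_Qm: "Qm (A::real^'n^'n) \<Longrightarrow> trace A \<in> \<rat>"
  unfolding Qm_def trace_def by (auto intro!: Rats_sum)

lemma det_Qm: "Qm (A::real^'n^'n) \<Longrightarrow> det A \<in> \<rat>"
  unfolding Qm_def det_def by (auto intro!: Rats_sum Rats_mult Rats_prod)

lemma Qm_inv:
  fixes A :: "real^'n^'n"
  assumes q: "Qm A" and r: "A ** X = mat 1"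
  shows "\<exists>R. Qm R \<and> A ** R = mat 1 \<and> R ** A = mat 1"
proof -
  have d: "det A \<noteq> 0" using r invertible_det_nz invertible_right_inverse by blast
  define R :: "real^'n^'n" where
    "R = (\<chi> i k. det (\<chi> r j. if j = i then (mat 1 :: real^'n^'n)$r$k else A$r$j) / det A)"
  have qR: "Qm R"
  proof -
    have h: "det (\<chi> r j. if j = i then (mat 1 :: real^'n^'n)$r$k else A$r$j) \<in> \<rat>" for i k
      by (rule det_Qm) (use q in \<open>simp add: Qm_def mat_def\<close>)
    show ?thesis unfolding R_def Qm_def using det_Qm[OF q] h by simp
  qed
  have col: "A *v (\<chi> i. R$i$k) = (\<chi> r. (mat 1 :: real^'n^'n)$r$k)" for k
  proof (rule cramer[OF d, THEN iffD2])
    show "(\<chi> i. R$i$k) = (\<chi> ka. det (\<chi> i j. if j = ka then (\<chi> r. (mat 1 :: real^'n^'n) $ r $ k) $ i else A $ i $ j) / det A)"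
    proof -
      have e: "(\<chi> i j. if j = ka then (\<chi> r. (mat 1 :: real^'n^'n) $ r $ k) $ i else A $ i $ j) =
           (\<chi> r j. if j = ka then (mat 1 :: real^'n^'n) $ r $ k else A $ r $ j)" for ka
        by (simp add: vec_eq_iff)
      show ?thesis unfolding e by (simp add: R_def)
    qed
  qed
  have "A ** R = mat 1"
  proof -
    have "(A ** R)$r$k = (mat 1 :: real^'n^'n)$r$k" for r k
      using arg_cong[OF col[of k], of "\<lambda>v. v$r"]
      by (simp add: matrix_matrix_mult_def matrix_vector_mult_def)
    then show ?thesis by (simp add: vec_eq_iff)
  qed
  then show ?thesis using qR matrix_left_right_inverse by blast
qed

lemma mneg_r: "(A::real^'n^'m) ** (- B) = - (A ** B)"
  by (simp add: vec_eq_iff matrix_matrix_mult_def sum_negf)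

lemma mneg_l: "(- (A::real^'n^'m)) ** B = - (A ** B)"
  by (simp add: vec_eq_iff matrix_matrix_mult_def sum_negf)

lemma matrix_add_rdistrib': "((A::real^'n^'m) + B) ** C = A ** C + B ** C"
  by (simp add: vec_eq_iff matrix_matrix_mult_def sum.distrib algebra_simps)

lemma matrix_diff_ldistrib: "(A::real^'n^'m) ** (B - C) = A ** B - A ** C"
  by (simp add: vec_eq_iff matrix_matrix_mult_def sum_subtractf algebra_simps)

lemma matrix_diff_rdistrib: "((A::real^'n^'m) - B) ** C = A ** C - B ** C"
  by (simp add: vec_eq_iff matrix_matrix_mult_def sum_subtractf algebra_simps)

lemma mscale_l: "(a *\<^sub>R (A::real^'n^'m)) ** B = a *\<^sub>R (A ** B)"
  by (simp add: scalar_matrix_assoc)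

lemma mscale_r: "(A::real^'n^'m) ** (a *\<^sub>R B) = a *\<^sub>R (A ** B)"
  by (simp add: matrix_scalar_ac scalar_matrix_assoc)

lemmas mring = matrix_add_ldistrib matrix_add_rdistrib' matrix_diff_ldistrib matrix_diff_rdistrib
  mscale_l mscale_r mneg_l mneg_r

definition cj :: "real^4^4 \<Rightarrow> real^4^4 \<Rightarrow> real^4^4 \<Rightarrow> real^4^4" where
  "cj Q P X = Q ** X ** P"

lemma cj_mult: "P ** Q = mat 1 \<Longrightarrow> cj Q P (X ** Y) = cj Q P X ** cj Q P Y"
  unfolding cj_def by (metis matrix_mul_assoc matrix_mul_rid)

lemma cj_add: "cj Q P (X + Y) = cj Q P X + cj Q P Y"
  unfolding cj_def by (simp add: mring)

lemma cj_diff: "cj Q P (X - Y) = cj Q P X - cj Q P Y"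
  unfolding cj_def by (simp add: mring)

lemma cj_scale: "cj Q P (a *\<^sub>R X) = a *\<^sub>R cj Q P X"
  unfolding cj_def by (simp add: mring)

lemma cj_inj: "P ** Q = mat 1 \<Longrightarrow> cj Q P X = cj Q P Y \<Longrightarrow> X = Y"
  unfolding cj_def by (metis matrix_mul_assoc matrix_mul_lid matrix_mul_rid)

lemma cj_one: "Q ** P = mat 1 \<Longrightarrow> cj Q P (mat 1) = mat 1"
  unfolding cj_def by simp

lemma cj_trace: "P ** Q = mat 1 \<Longrightarrow> trace (cj Q P X) = trace X"
  unfolding cj_def by (metis matrix_mul_assoc matrix_mul_rid trace_mul_sym)


lemma hodge20_re: "hodge20 \<beta> I u v = 0 \<Longrightarrow> \<beta> u v = \<beta> (I *v u) (I *v v)"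
proof -
  assume h: "hodge20 \<beta> I u v = 0"
  have "Re (hodge20 \<beta> I u v) = (\<beta> u v - \<beta> (I *v u) (I *v v)) / 4"
    by (simp add: hodge20_def)
  with h show ?thesis by simp
qed

lemma inv_conj: "transpose I ** M ** I = M \<Longrightarrow> I ** I = - mat 1 \<Longrightarrow> transpose I ** M = - (M ** (I::real^4^4))"
proof -
  assume a: "transpose I ** M ** I = M" and b: "I ** I = - mat 1"
  have "M ** I = transpose I ** M ** (I ** I)" using a by (metis matrix_mul_assoc)
  also have "\<dots> = - (transpose I ** M)" by (metis b mneg_r matrix_mul_rid)
  finally show ?thesis by simp
qed

lemma comm_from:
  fixes H I M :: "real^4^4"
  assumes "H ** transpose I = - (I ** H)" and "transpose I ** M = - (M ** I)"
  shows "(H ** M) ** I = I ** (H ** M)"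
proof -
  have "(H ** M) ** I = H ** (M ** I)" by (simp add: matrix_mul_assoc)
  also have "M ** I = - (transpose I ** M)" using assms(2) by simp
  also have "H ** (- (transpose I ** M)) = - ((H ** transpose I) ** M)" by (simp add: mneg_r matrix_mul_assoc)
  also have "\<dots> = I ** (H ** M)" using assms(1) by (simp add: mneg_l matrix_mul_assoc)
  finally show ?thesis .
qed

lemma core:
  fixes G B I :: "real^4^4"
  assumes G_sym: "transpose G = G"
    and G_pos: "\<forall>u. u \<noteq> 0 \<longrightarrow> bilin G u u > 0"
    and B_anti: "transpose B = - B"
    and G_rat: "\<forall>i j. G $ i $ j \<in> \<rat>"
    and B_rat: "\<forall>i j. B $ i $ j \<in> \<rat>"
    and I_cplx: "I ** I = - mat 1"
    and I_compat: "compatible G I"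
    and I_pol: "polarizable I"
    and B_20: "\<forall>u v. hodge20 (bilin B) I u v = 0"
  shows "\<exists>\<alpha> \<beta>. Qm \<alpha> \<and> Qm \<beta> \<and> (\<exists>a b. kahler G I = a *\<^sub>R \<alpha> + b *\<^sub>R \<beta>)
            \<and> (\<exists>a b. B = a *\<^sub>R \<alpha> + b *\<^sub>R \<beta>)"
proof -
  have qG: "Qm G" using G_rat by (simp add: Qm_def)
  have qB: "Qm B" using B_rat by (simp add: Qm_def)
  have GI: "transpose I ** G ** I = G"
    using I_compat unfolding compatible_def by (intro bilin_eq_mat) (simp add: bilin_conj)
  have IGm: "transpose I ** G = - (G ** I)" using inv_conj[OF GI I_cplx] .
  have kah: "kahler G I = - (G ** I)" by (simp add: kahler_def IGm)
  obtain H where qH: "Qm H" and GH: "G ** H = mat 1" and HG: "H ** G = mat 1"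
  proof -
    have "\<forall>x. G *v x = 0 \<longrightarrow> x = 0"
    proof (intro allI impI)
      fix x assume "G *v x = 0"
      then have "bilin G x x = 0" by (simp add: bilin_def)
      then show "x = 0" using G_pos by force
    qed
    then obtain B' where "B' ** G = mat 1" using matrix_left_invertible_ker by blast
    then have "G ** B' = mat 1" using matrix_left_right_inverse by blast
    then show ?thesis using Qm_inv[OF qG] that by blast
  qed
  obtain \<psi> where \<psi>_anti: "transpose \<psi> = - \<psi>" and \<psi>_int: "\<forall>i j. \<psi> $ i $ j \<in> \<int>"
    and \<psi>_11: "is_11 (bilin \<psi>) I" and \<psi>_pos: "\<forall>u. u \<noteq> 0 \<longrightarrow> bilin \<psi> (I *v u) u > 0"
    using I_pol unfolding polarizable_def by blast
  have q\<psi>: "Qm \<psi>" using \<psi>_int Ints_subset_Rats by (auto simp: Qm_def)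
  have \<psi>I: "transpose I ** \<psi> ** I = \<psi>"
    using \<psi>_11 unfolding is_11_def by (intro bilin_eq_mat) (metis bilin_conj hodge20_re)
  have BI: "transpose I ** B ** I = B"
    using B_20 by (intro bilin_eq_mat) (metis bilin_conj hodge20_re)
  have HIt: "H ** transpose I = - (I ** H)"
  proof -
    have "H ** transpose I = H ** (transpose I ** G) ** H" by (simp add: GH matrix_mul_assoc[symmetric])
    also have "\<dots> = - (H ** G ** I ** H)" by (simp add: IGm mneg_r mneg_l matrix_mul_assoc)
    finally show ?thesis by (simp add: HG)
  qed
  define A where "A = H ** \<psi>"
  define C where "C = H ** B"
  have qA: "Qm A" unfolding A_def by (intro Qm_mult qH q\<psi>)
  have qC: "Qm C" unfolding C_def by (intro Qm_mult qH qB)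
  have GA: "G ** A = \<psi>" unfolding A_def by (simp add: matrix_mul_assoc GH)
  have GC: "G ** C = B" unfolding C_def by (simp add: matrix_mul_assoc GH)
  have AI: "A ** I = I ** A" unfolding A_def by (rule comm_from[OF HIt inv_conj[OF \<psi>I I_cplx]])
  have CI: "C ** I = I ** C" unfolding C_def by (rule comm_from[OF HIt inv_conj[OF BI I_cplx]])
  obtain P where PGP: "transpose P ** G ** P = mat 1" and IP: "I ** P = P ** Jm"
    using adapted_basis[OF G_sym G_pos I_cplx GI] by blast
  define Q where "Q = transpose P ** G"
  have QP: "Q ** P = mat 1" using PGP by (simp add: Q_def)
  have PQ: "P ** Q = mat 1" using QP matrix_left_right_inverse by blast
  define \<Phi> where "\<Phi> = cj Q P"
  have \<Phi>mult: "\<Phi> (X ** Y) = \<Phi> X ** \<Phi> Y" for X Y unfolding \<Phi>_def by (rule cj_mult[OF PQ])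
  have \<Phi>add: "\<Phi> (X + Y) = \<Phi> X + \<Phi> Y" for X Y unfolding \<Phi>_def by (rule cj_add)
  have \<Phi>diff: "\<Phi> (X - Y) = \<Phi> X - \<Phi> Y" for X Y unfolding \<Phi>_def by (rule cj_diff)
  have \<Phi>scale: "\<Phi> (a *\<^sub>R X) = a *\<^sub>R \<Phi> X" for a X unfolding \<Phi>_def by (rule cj_scale)
  have \<Phi>inj: "\<Phi> X = \<Phi> Y \<Longrightarrow> X = Y" for X Y unfolding \<Phi>_def by (rule cj_inj[OF PQ])
  have \<Phi>one: "\<Phi> (mat 1) = mat 1" unfolding \<Phi>_def by (rule cj_one[OF QP])
  have \<Phi>tr: "trace (\<Phi> X) = trace X" for X unfolding \<Phi>_def by (rule cj_trace[OF PQ])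
  have \<Phi>I: "\<Phi> I = Jm"
    unfolding \<Phi>_def cj_def by (metis IP QP matrix_mul_assoc matrix_mul_lid)
  have \<Phi>skew: "transpose (\<Phi> X) = - \<Phi> X" if "transpose (G ** X) = - (G ** X)" for X
  proof -
    have e: "\<Phi> X = transpose P ** (G ** X) ** P" unfolding \<Phi>_def cj_def Q_def by (simp add: matrix_mul_assoc)
    show ?thesis unfolding e using that by (simp add: matrix_transpose_mul mneg_l mneg_r matrix_mul_assoc)
  qed
  have \<Phi>comm: "\<Phi> X ** Jm = Jm ** \<Phi> X" if "X ** I = I ** X" for X
    by (metis \<Phi>I \<Phi>mult that)
  have skA: "transpose (G ** A) = - (G ** A)" using GA \<psi>_anti by simp
  have skC: "transpose (G ** C) = - (G ** C)" using GC B_anti by simp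
  obtain c t p q where \<Phi>A: "\<Phi> A = mk c t p q"
    using model_form[OF \<Phi>skew[OF skA] \<Phi>comm[OF AI]] by blast
  obtain d r1 r2 r3 where \<Phi>C: "\<Phi> C = mk d r1 r2 r3"
    using model_form[OF \<Phi>skew[OF skC] \<Phi>comm[OF CI]] by blast
  have posm: "(Jm *v x) \<bullet> (mk c t p q *v x) > 0" if x: "x \<noteq> 0" for x
  proof -
    define u where "u = P *v x"
    have "u \<noteq> 0"
    proof
      assume "u = 0"
      then have "Q *v (P *v x) = 0" by (simp add: u_def)
      then show False using x by (simp add: matrix_vector_mul_assoc QP)
    qed
    then have pos: "bilin \<psi> (I *v u) u > 0" using \<psi>_pos by blast
    have e1: "I *v u = P *v (Jm *v x)" by (simp add: u_def matrix_vector_mul_assoc IP)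
    have AP: "A ** P = P ** \<Phi> A" unfolding \<Phi>_def cj_def
      by (metis PQ matrix_mul_assoc matrix_mul_lid)
    have e2: "\<psi> *v u = (G ** P) *v (\<Phi> A *v x)"
      unfolding u_def GA[symmetric] by (simp add: matrix_vector_mul_assoc matrix_mul_assoc[symmetric] AP)
    have "bilin \<psi> (I *v u) u = (Jm *v x) \<bullet> ((transpose P ** (G ** P)) *v (\<Phi> A *v x))"
      unfolding bilin_def e1 e2 mv_inner_transpose by (simp add: matrix_vector_mul_assoc matrix_mul_assoc)
    also have "\<dots> = (Jm *v x) \<bullet> (\<Phi> A *v x)" using PGP by (simp add: matrix_mul_assoc)
    finally show ?thesis using pos \<Phi>A by simp
  qed
  have cpos: "c > 0" and cnu: "c^2 > t^2+p^2+q^2" using model_pos[OF posm] by auto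
  have inv_trick: "\<exists>Y a b. Qm Y \<and> I = a *\<^sub>R X + b *\<^sub>R Y"
    if qX: "Qm X" and \<Phi>X: "\<Phi> X = mk e s1 s2 s3" and ne: "s1^2+s2^2+s3^2 \<noteq> e^2" and e0: "e \<noteq> 0"
    for X e s1 s2 s3
  proof -
    define \<kappa> where "\<kappa> = s1^2+s2^2+s3^2 - e^2"
    have k0: "\<kappa> \<noteq> 0" using ne by (simp add: \<kappa>_def)
    define M where "M = (1/\<kappa>) *\<^sub>R mk e (-s1) (-s2) (-s3)"
    have XM: "\<Phi> X ** M = mat 1"
      unfolding M_def \<Phi>X mscale_r model_inv \<kappa>_def[symmetric] using k0 by simp
    define Y0 where "Y0 = P ** M ** Q"
    have \<Phi>Y0: "\<Phi> Y0 = M" unfolding \<Phi>_def cj_def Y0_def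
      by (metis QP matrix_mul_assoc matrix_mul_lid matrix_mul_rid)
    have "\<Phi> (X ** Y0) = \<Phi> (mat 1)" by (simp add: \<Phi>mult \<Phi>Y0 XM \<Phi>one)
    then have "X ** Y0 = mat 1" by (rule \<Phi>inj)
    then obtain Y where qY: "Qm Y" and XY: "X ** Y = mat 1" and YX: "Y ** X = mat 1"
      using Qm_inv[OF qX] by blast
    have \<Phi>Y: "\<Phi> Y = M"
    proof -
      have "\<Phi> Y = \<Phi> Y ** (\<Phi> X ** M)" by (simp add: XM)
      also have "\<dots> = \<Phi> (Y ** X) ** M" by (simp add: \<Phi>mult matrix_mul_assoc)
      finally show ?thesis by (simp add: YX \<Phi>one)
    qed
    have "\<Phi> (X + \<kappa> *\<^sub>R Y) = \<Phi> ((2*e) *\<^sub>R I)"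
      unfolding \<Phi>add \<Phi>scale \<Phi>Y \<Phi>X \<Phi>I M_def using k0 by (simp add: model_sum)
    then have h: "X + \<kappa> *\<^sub>R Y = (2*e) *\<^sub>R I" by (rule \<Phi>inj)
    have "I = (1/(2*e)) *\<^sub>R ((2*e) *\<^sub>R I)" using e0 by simp
    also have "\<dots> = (1/(2*e)) *\<^sub>R (X + \<kappa> *\<^sub>R Y)" using h by simp
    also have "\<dots> = (1/(2*e)) *\<^sub>R X + (\<kappa>/(2*e)) *\<^sub>R Y" by (simp add: scaleR_add_right)
    finally have "I = (1/(2*e)) *\<^sub>R X + (\<kappa>/(2*e)) *\<^sub>R Y" .
    then show ?thesis using qY by blast
  qed
  have kahc: "kahler G I = a *\<^sub>R (- (G ** X)) + b *\<^sub>R (- (G ** Y))"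
    if "I = a *\<^sub>R X + b *\<^sub>R Y" for a b X Y
  proof -
    have "G ** I = a *\<^sub>R (G ** X) + b *\<^sub>R (G ** Y)" unfolding that by (simp add: mring)
    then show ?thesis using kah by simp
  qed
  show ?thesis
  proof (cases "r1 = 0 \<and> r2 = 0 \<and> r3 = 0")
    case True
    have "\<Phi> C = \<Phi> (d *\<^sub>R I)" using True by (simp add: \<Phi>C \<Phi>scale \<Phi>I mat4_eq mk_def Jm_def)
    then have CdI: "C = d *\<^sub>R I" by (rule \<Phi>inj)
    obtain Y a b where qY: "Qm Y" and Ie: "I = a *\<^sub>R A + b *\<^sub>R Y"
      using inv_trick[OF qA \<Phi>A] cnu cpos by force
    have "B = (- d) *\<^sub>R kahler G I" unfolding kah GC[symmetric] CdI by (simp add: mring)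
    then have "B = (- d * a) *\<^sub>R (- (G ** A)) + (- d * b) *\<^sub>R (- (G ** Y))"
      unfolding kahc[OF Ie] by (simp add: algebra_simps)
    moreover have "Qm (- (G ** A))" "Qm (- (G ** Y))"
      using Qm_mult[OF qG qA] Qm_mult[OF qG qY] by (auto simp: Qm_def)
    ultimately show ?thesis using kahc[OF Ie] by blast
  next
    case nz: False
    show ?thesis
    proof (cases "d \<noteq> 0 \<and> r1^2+r2^2+r3^2 \<noteq> d^2")
      case True
      obtain Y a b where qY: "Qm Y" and Ie: "I = a *\<^sub>R C + b *\<^sub>R Y"
        using inv_trick[OF qC \<Phi>C] True by blast
      have "B = (-1) *\<^sub>R (- (G ** C)) + 0 *\<^sub>R (- (G ** Y))" by (simp add: GC)
      moreover have "Qm (- (G ** C))" "Qm (- (G ** Y))"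
        using Qm_mult[OF qG qC] Qm_mult[OF qG qY] by (auto simp: Qm_def)
      ultimately show ?thesis using kahc[OF Ie] by blast
    next
      case False
      define \<nu> where "\<nu> = t^2+p^2+q^2"
      define \<nu>' where "\<nu>' = r1^2+r2^2+r3^2"
      define \<mu> where "\<mu> = t*r1+p*r2+q*r3"
      have nupos: "\<nu>' > 0"
      proof -
        have a: "r1^2 \<ge> 0" "r2^2 \<ge> 0" "r3^2 \<ge> 0" by simp_all
        have "r1^2 > 0 \<or> r2^2 > 0 \<or> r3^2 > 0" using nz by simp
        then show ?thesis using a unfolding \<nu>'_def by linarith
      qed
      have dle: "d^2 \<le> \<nu>'" using False unfolding \<nu>'_def[symmetric] using nupos by auto
      have trC: "trace (C ** C) = -4*(d^2 + \<nu>')"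
        using \<Phi>tr[of "C ** C"] by (simp add: \<Phi>mult \<Phi>C model_tr2 \<nu>'_def)
      have trq: "trace (C ** C) \<in> \<rat>" by (rule trace_Qm[OF Qm_mult[OF qC qC]])
      have nuq: "\<nu>' \<in> \<rat>"
      proof (cases "d = 0")
        case True
        then have "\<nu>' = - trace (C ** C) / 4" using trC by simp
        then show ?thesis using trq by simp
      next
        case False
        then have "d^2 = \<nu>'" using \<open>\<not> (d \<noteq> 0 \<and> r1^2+r2^2+r3^2 \<noteq> d^2)\<close> by (simp add: \<nu>'_def)
        then have "\<nu>' = - trace (C ** C) / 8" using trC by simp
        then show ?thesis using trq by simp
      qed
      define K where "K = C ** (A ** C - C ** A) - (A ** C - C ** A) ** C"
      define \<kappa> where "\<kappa> = 4*(\<mu>*d - \<nu>'*c)"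
      have "\<Phi> (K - (4*\<nu>') *\<^sub>R A + (4*\<mu>) *\<^sub>R C) = \<Phi> (\<kappa> *\<^sub>R I)"
        unfolding K_def \<Phi>add \<Phi>diff \<Phi>scale \<Phi>mult \<Phi>A \<Phi>C \<Phi>I \<kappa>_def \<nu>'_def \<mu>_def
        by (rule model_K)
      then have Ke: "K - (4*\<nu>') *\<^sub>R A + (4*\<mu>) *\<^sub>R C = \<kappa> *\<^sub>R I" by (rule \<Phi>inj)
      have k0: "\<kappa> \<noteq> 0"
      proof
        assume "\<kappa> = 0"
        then have e: "\<mu>*d = \<nu>'*c" by (simp add: \<kappa>_def)
        have cs: "\<mu>^2 \<le> \<nu>*\<nu>'"
        proof -
          have "\<nu>*\<nu>' - \<mu>^2 = (t*r2-p*r1)^2 + (t*r3-q*r1)^2 + (p*r3-q*r2)^2"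
            by (simp add: \<nu>_def \<nu>'_def \<mu>_def power2_eq_square algebra_simps)
          moreover have "(t*r2-p*r1)^2 + (t*r3-q*r1)^2 + (p*r3-q*r2)^2 \<ge> 0" by simp
          ultimately show ?thesis by linarith
        qed
        have nu0: "\<nu> \<ge> 0" by (simp add: \<nu>_def)
        have "(\<mu>*d)^2 = \<mu>^2 * d^2" by (simp add: power_mult_distrib)
        also have "\<dots> \<le> (\<nu>*\<nu>') * \<nu>'" using cs dle nu0 nupos by (intro mult_mono) auto
        also have "\<dots> < c^2 * \<nu>'^2"
        proof -
          have "\<nu> < c^2" using cnu by (simp add: \<nu>_def)
          moreover have "\<nu>'^2 > 0" using nupos by simp
          ultimately have "\<nu> * \<nu>'^2 < c^2 * \<nu>'^2" by simp
          then show ?thesis by (simp add: power2_eq_square algebra_simps)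
        qed
        also have "\<dots> = (\<nu>'*c)^2" by (simp add: power_mult_distrib algebra_simps)
        finally show False using e by simp
      qed
      have Ie: "I = (1/\<kappa>) *\<^sub>R (K - (4*\<nu>') *\<^sub>R A) + (- 4*\<mu>/\<kappa>) *\<^sub>R (- C)"
      proof -
        have "I = (1/\<kappa>) *\<^sub>R (K - (4*\<nu>') *\<^sub>R A + (4*\<mu>) *\<^sub>R C)" using Ke k0 by simp
        then show ?thesis by (simp add: algebra_simps divide_simps)
      qed
      have qK: "Qm (K - (4*\<nu>') *\<^sub>R A)"
        unfolding K_def using qA qC nuq
        by (intro Qm_diff Qm_mult Qm_scale) (auto intro: Qm_diff Qm_mult)
      have "B = 0 *\<^sub>R (- (G ** (K - (4*\<nu>') *\<^sub>R A))) + 1 *\<^sub>R (- (G ** (- C)))"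
        by (simp add: GC mneg_r)
      moreover have "Qm (- (G ** (K - (4*\<nu>') *\<^sub>R A)))" "Qm (- (G ** (- C)))"
        using Qm_mult[OF qG qK] Qm_mult[OF qG qC] by (auto simp: Qm_def mneg_r)
      ultimately show ?thesis using kahc[OF Ie] by blast
    qed
  qed
qed


lemma det_4e: "det (A::'a::comm_ring_1^4^4) = 
 A$1$1*A$2$2*A$3$3*A$4$4 - A$1$1*A$2$2*A$3$4*A$4$3 - A$1$1*A$2$3*A$3$2*A$4$4 + A$1$1*A$2$3*A$3$4*A$4$2
 + A$1$1*A$2$4*A$3$2*A$4$3 - A$1$1*A$2$4*A$3$3*A$4$2
 - A$1$2*A$2$1*A$3$3*A$4$4 + A$1$2*A$2$1*A$3$4*A$4$3 + A$1$2*A$2$3*A$3$1*A$4$4 - A$1$2*A$2$3*A$3$4*A$4$1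
 - A$1$2*A$2$4*A$3$1*A$4$3 + A$1$2*A$2$4*A$3$3*A$4$1
 + A$1$3*A$2$1*A$3$2*A$4$4 - A$1$3*A$2$1*A$3$4*A$4$2 - A$1$3*A$2$2*A$3$1*A$4$4 + A$1$3*A$2$2*A$3$4*A$4$1
 + A$1$3*A$2$4*A$3$1*A$4$2 - A$1$3*A$2$4*A$3$2*A$4$1
 - A$1$4*A$2$1*A$3$2*A$4$3 + A$1$4*A$2$1*A$3$3*A$4$2 + A$1$4*A$2$2*A$3$1*A$4$3 - A$1$4*A$2$2*A$3$3*A$4$1
 - A$1$4*A$2$3*A$3$1*A$4$2 + A$1$4*A$2$3*A$3$2*A$4$1"
proof -
  have f1: "finite {2::4, 3, 4}" "1 \<notin> {2::4, 3, 4}" by auto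
  have f2: "finite {3::4, 4}" "2 \<notin> {3::4, 4}" by auto
  have f3: "finite {4::4}" "3 \<notin> {4::4}" by auto
  show ?thesis
    unfolding det_def UNIV_4
    unfolding sum_over_permutations_insert[OF f1]
    unfolding sum_over_permutations_insert[OF f2]
    unfolding sum_over_permutations_insert[OF f3]
    unfolding permutes_sing
    by (simp add: sign_swap_id permutation_swap_id permutation_compose sign_compose sign_id swap_id_eq algebra_simps)
qed

lemma ratkernel:
  fixes x2 x3 x4 y2 y3 y4 :: real
  assumes "x2 \<in> \<rat>" "x3 \<in> \<rat>" "x4 \<in> \<rat>" "y2 \<in> \<rat>" "y3 \<in> \<rat>" "y4 \<in> \<rat>"
  shows "\<exists>w2 w3 w4. w2 \<in> \<rat> \<and> w3 \<in> \<rat> \<and> w4 \<in> \<rat> \<and> (w2 \<noteq> 0 \<or> w3 \<noteq> 0 \<or> w4 \<noteq> 0) \<and>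
     x2*w2 + x3*w3 + x4*w4 = 0 \<and> y2*w2 + y3*w3 + y4*w4 = 0"
proof -
  define c1 where "c1 = x3*y4 - x4*y3"
  define c2 where "c2 = x4*y2 - x2*y4"
  define c3 where "c3 = x2*y3 - x3*y2"
  have q: "c1 \<in> \<rat>" "c2 \<in> \<rat>" "c3 \<in> \<rat>" using assms by (simp_all add: c1_def c2_def c3_def)
  show ?thesis
  proof (cases "c1 \<noteq> 0 \<or> c2 \<noteq> 0 \<or> c3 \<noteq> 0")
    case True
    show ?thesis
      by (rule exI[of _ c1], rule exI[of _ c2], rule exI[of _ c3])
         (use True q in \<open>simp add: c1_def c2_def c3_def algebra_simps\<close>)
  next
    case False
    then have c: "c1 = 0" "c2 = 0" "c3 = 0" by auto
    show ?thesis
    proof (cases "x2 \<noteq> 0")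
      case True
      show ?thesis
        by (rule exI[of _ "-x4"], rule exI[of _ 0], rule exI[of _ x2])
           (use True c assms in \<open>simp add: c1_def c2_def c3_def algebra_simps\<close>)
    next
      case x2: False
      show ?thesis
      proof (cases "x3 \<noteq> 0 \<or> x4 \<noteq> 0")
        case True
        show ?thesis
          by (rule exI[of _ 0], rule exI[of _ x4], rule exI[of _ "-x3"])
             (use True c assms in \<open>auto simp add: c1_def c2_def c3_def algebra_simps\<close>)
      next
        case False
        then have x: "x2 = 0" "x3 = 0" "x4 = 0" using x2 by auto
        show ?thesis
        proof (cases "y2 \<noteq> 0")
          case True
          show ?thesis
            by (rule exI[of _ "-y4"], rule exI[of _ 0], rule exI[of _ y2])
               (use True x assms in \<open>simp add: algebra_simps\<close>)
        next
          case y2: False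
          show ?thesis
          proof (cases "y3 \<noteq> 0 \<or> y4 \<noteq> 0")
            case True
            show ?thesis
              by (rule exI[of _ 0], rule exI[of _ y4], rule exI[of _ "-y3"])
                 (use True x assms in \<open>auto simp add: algebra_simps\<close>)
          next
            case False
            then show ?thesis
              by (intro exI[of _ 1] exI[of _ 0]) (use x y2 in auto)
          qed
        qed
      qed
    qed
  qed
qed

lemma intscale:
  fixes w2 w3 w4 :: real
  assumes q: "w2 \<in> \<rat>" "w3 \<in> \<rat>" "w4 \<in> \<rat>" and nz: "w2 \<noteq> 0 \<or> w3 \<noteq> 0 \<or> w4 \<noteq> 0"
  shows "\<exists>k2 k3 k4 :: int. \<exists>l :: real. l \<noteq> 0 \<and> w2 = l * k2 \<and> w3 = l * k3 \<and> w4 = l * k4 \<and>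
           gcd (gcd k2 k3) k4 = 1"
proof -
  obtain n2 m2 where m2: "m2 > 0" "w2 = of_int n2 / of_int m2" using q(1) Rats_cases' by blast
  obtain n3 m3 where m3: "m3 > 0" "w3 = of_int n3 / of_int m3" using q(2) Rats_cases' by blast
  obtain n4 m4 where m4: "m4 > 0" "w4 = of_int n4 / of_int m4" using q(3) Rats_cases' by blast
  define D where "D = m2*m3*m4"
  have D0: "D > 0" using m2 m3 m4 by (simp add: D_def)
  define z2 where "z2 = n2*m3*m4"
  define z3 where "z3 = n3*m2*m4"
  define z4 where "z4 = n4*m2*m3"
  have wz2: "w2 = of_int z2 / of_int D" using m2 m3 m4 by (simp add: z2_def D_def)
  have wz3: "w3 = of_int z3 / of_int D" using m2 m3 m4 by (simp add: z3_def D_def)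
  have wz4: "w4 = of_int z4 / of_int D" using m2 m3 m4 by (simp add: z4_def D_def)
  have znz: "z2 \<noteq> 0 \<or> z3 \<noteq> 0 \<or> z4 \<noteq> 0" using nz wz2 wz3 wz4 by auto
  define g where "g = gcd (gcd z2 z3) z4"
  have g0: "g \<noteq> 0" using znz by (auto simp: g_def)
  have gpos: "g > 0" using g0 by (simp add: g_def order_le_less)
  have d2: "g dvd z2" unfolding g_def by (meson dvd_trans gcd_dvd1)
  have d3: "g dvd z3" unfolding g_def by (meson dvd_trans gcd_dvd1 gcd_dvd2)
  have d4: "g dvd z4" unfolding g_def by simp
  obtain k2 where k2: "z2 = g * k2" using d2 by blast
  obtain k3 where k3: "z3 = g * k3" using d3 by blast
  obtain k4 where k4: "z4 = g * k4" using d4 by blast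
  have "g * gcd (gcd k2 k3) k4 = gcd (gcd (g*k2) (g*k3)) (g*k4)"
    using gpos by (simp add: gcd_mult_distrib_int[symmetric] abs_of_pos)
  also have "\<dots> = gcd (gcd z2 z3) z4" by (simp only: k2 k3 k4)
  also have "\<dots> = g" by (simp add: g_def)
  finally have f1: "gcd (gcd k2 k3) k4 = 1" using g0 by simp
  have f2: "of_int g / of_int D \<noteq> (0::real)" using g0 D0 by simp
  have f3: "w2 = (of_int g / of_int D) * k2" "w3 = (of_int g / of_int D) * k3" "w4 = (of_int g / of_int D) * k4"
    by (simp_all add: wz2 wz3 wz4 k2 k3 k4)
  show ?thesis
    apply (rule exI[of _ k2], rule exI[of _ k3], rule exI[of _ k4], rule exI[of _ "of_int g / of_int D"])
    using f1 f2 f3 by simp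
qed

lemma complete3:
  fixes k2 k3 k4 :: int
  assumes "gcd (gcd k2 k3) k4 = 1"
  shows "\<exists>s2 s3 s4 t2 t3 t4 :: int.
     k2*(s3*t4 - s4*t3) - k3*(s2*t4 - s4*t2) + k4*(s2*t3 - s3*t2) = 1 \<or>
     k2*(s3*t4 - s4*t3) - k3*(s2*t4 - s4*t2) + k4*(s2*t3 - s3*t2) = -1"
proof (cases "gcd k2 k3 = 0")
  case True
  then have z: "k2 = 0" "k3 = 0" by auto
  moreover have "\<bar>k4\<bar> = 1" using assms True by simp
  then have "k4 = 1 \<or> k4 = -1" by linarith
  ultimately show ?thesis
    apply (rule_tac exI[of _ 1], rule_tac exI[of _ 0], rule_tac exI[of _ 0])
    apply (rule_tac exI[of _ 0], rule_tac exI[of _ 1], rule_tac exI[of _ 0])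
    by simp
next
  case False
  define g where "g = gcd k2 k3"
  have gpos: "g \<ge> 0" by (simp add: g_def)
  obtain a' where a': "k2 = g * a'" unfolding g_def by (meson dvd_def gcd_dvd1)
  obtain b' where b': "k3 = g * b'" unfolding g_def by (meson dvd_def gcd_dvd2)
  have "g * gcd a' b' = gcd (g*a') (g*b')" using gcd_mult_distrib_int[of g a' b'] gpos by simp
  also have "\<dots> = gcd k2 k3" using a' b' by simp
  also have "\<dots> = g" by (simp add: g_def)
  finally have "g * gcd a' b' = g" .
  moreover have "g \<noteq> 0" using False by (simp add: g_def)
  ultimately have ab: "gcd a' b' = 1" by simp
  obtain x y where xy: "x * a' + y * b' = 1" using bezout_int[of a' b'] ab by auto
  obtain u1 v1 where uv: "u1 * g + v1 * k4 = 1" using bezout_int[of g k4] assms by (auto simp: g_def)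
  show ?thesis
    apply (rule exI[of _ "-y"], rule exI[of _ x], rule exI[of _ 0])
    apply (rule exI[of _ "- v1 * a'"], rule exI[of _ "- v1 * b'"], rule exI[of _ u1])
    apply (rule disjI1)
  proof -
    have "k2 * (x * u1 - 0 * (- v1 * b')) - k3 * (- y * u1 - 0 * (- v1 * a')) + k4 * (- y * (- v1 * b') - x * (- v1 * a'))
        = u1 * g * (x * a' + y * b') + v1 * k4 * (x * a' + y * b')"
      by (simp add: a' b' algebra_simps)
    also have "\<dots> = 1" using xy uv by simp
    finally show "k2 * (x * u1 - 0 * (- v1 * b')) - k3 * (- y * u1 - 0 * (- v1 * a')) + k4 * (- y * (- v1 * b') - x * (- v1 * a')) = 1" .
  qed
qed

lemma bilin_addM: "bilin (M + N) u v = bilin M u v + bilin N u v"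
  by (simp add: bilin_def matrix_vector_mult_add_rdistrib inner_add_right)

lemma bilin_scaleM: "bilin (a *\<^sub>R (M::real^4^4)) u v = a * bilin M u v"
  by (simp add: bilin_def inner4 mvmult4 algebra_simps)

lemma bilin_transpose: "bilin (transpose (M::real^4^4)) u v = bilin M v u"
  by (simp add: bilin_def inner4 mvmult4 transpose_def algebra_simps)

lemma bilin_neg: "bilin (- (M::real^4^4)) u v = - bilin M u v"
  by (simp add: bilin_def inner4 mvmult4 algebra_simps)

lemma bilin_skew: "transpose M = - M \<Longrightarrow> bilin (M::real^4^4) u v = - bilin M v u"
  by (metis bilin_transpose bilin_neg)

lemma bilin_lin: "bilin M (x1 *\<^sub>R a + y1 *\<^sub>R b) (x2 *\<^sub>R a + y2 *\<^sub>R b) =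
  x1*x2*bilin M a a + x1*y2*bilin M a b + y1*x2*bilin M b a + y1*y2*bilin M b b"
  by (simp add: bilin_def matrix_vector_right_distrib matrix_vector_mult_scaleR inner_add_left inner_add_right algebra_simps)

lemma transpose_lin: "transpose (a *\<^sub>R (A::real^4^4) + b *\<^sub>R B) = a *\<^sub>R transpose A + b *\<^sub>R transpose B"
  by (simp add: vec_eq_iff transpose_def)

lemma lattice:
  fixes \<alpha> \<beta> \<Omega> B :: "real^4^4"
  assumes qa: "Qm \<alpha>" and qb: "Qm \<beta>" and sO: "transpose \<Omega> = - \<Omega>" and sB: "transpose B = - B"
    and eO: "\<Omega> = a1 *\<^sub>R \<alpha> + a2 *\<^sub>R \<beta>" and eB: "B = b1 *\<^sub>R \<alpha> + b2 *\<^sub>R \<beta>"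
  shows "\<exists>\<Gamma>f. primitive_rank2 \<Gamma>f \<and>
           (\<forall>u \<in> span \<Gamma>f. \<forall>v \<in> span \<Gamma>f. bilin \<Omega> u v = 0 \<and> bilin B u v = 0)"
proof -
  define \<alpha>' where "\<alpha>' = \<alpha> - transpose \<alpha>"
  define \<beta>' where "\<beta>' = \<beta> - transpose \<beta>"
  have qa': "Qm \<alpha>'" unfolding \<alpha>'_def by (intro Qm_diff Qm_transpose qa)
  have qb': "Qm \<beta>'" unfolding \<beta>'_def by (intro Qm_diff Qm_transpose qb)
  obtain w2 w3 w4 where wq: "w2 \<in> \<rat>" "w3 \<in> \<rat>" "w4 \<in> \<rat>" and wnz: "w2 \<noteq> 0 \<or> w3 \<noteq> 0 \<or> w4 \<noteq> 0"
    and wa: "\<alpha>'$1$2 * w2 + \<alpha>'$1$3 * w3 + \<alpha>'$1$4 * w4 = 0"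
    and wb: "\<beta>'$1$2 * w2 + \<beta>'$1$3 * w3 + \<beta>'$1$4 * w4 = 0"
    using ratkernel[of "\<alpha>'$1$2" "\<alpha>'$1$3" "\<alpha>'$1$4" "\<beta>'$1$2" "\<beta>'$1$3" "\<beta>'$1$4"] qa' qb'
    unfolding Qm_def by blast
  obtain k2 k3 k4 :: int and l :: real where l0: "l \<noteq> 0" and wk: "w2 = l * k2" "w3 = l * k3" "w4 = l * k4"
    and kg: "gcd (gcd k2 k3) k4 = 1"
    using intscale[OF wq wnz] by metis
  have ka: "\<alpha>'$1$2 * k2 + \<alpha>'$1$3 * k3 + \<alpha>'$1$4 * k4 = 0"
  proof -
    have "l * (\<alpha>'$1$2 * k2 + \<alpha>'$1$3 * k3 + \<alpha>'$1$4 * k4) = 0" using wa wk by (simp add: algebra_simps)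
    then show ?thesis using l0 by simp
  qed
  have kb: "\<beta>'$1$2 * k2 + \<beta>'$1$3 * k3 + \<beta>'$1$4 * k4 = 0"
  proof -
    have "l * (\<beta>'$1$2 * k2 + \<beta>'$1$3 * k3 + \<beta>'$1$4 * k4) = 0" using wb wk by (simp add: algebra_simps)
    then show ?thesis using l0 by simp
  qed
  obtain s2 s3 s4 t2 t3 t4 :: int where st:
    "k2*(s3*t4 - s4*t3) - k3*(s2*t4 - s4*t2) + k4*(s2*t3 - s3*t2) = 1 \<or>
     k2*(s3*t4 - s4*t3) - k3*(s2*t4 - s4*t2) + k4*(s2*t3 - s3*t2) = -1"
    using complete3[OF kg] by blast
  define f :: "4 \<Rightarrow> real^4" where
    "f i = (if i = 1 then v4 1 0 0 0 else if i = 2 then v4 0 (of_int k2) (of_int k3) (of_int k4)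
            else if i = 3 then v4 0 (of_int s2) (of_int s3) (of_int s4) else v4 0 (of_int t2) (of_int t3) (of_int t4))" for i
  define \<Gamma> where "\<Gamma> = {of_int a *\<^sub>R f 1 + of_int b *\<^sub>R f 2 | a b. True}"
  have prim: "primitive_rank2 \<Gamma>"
    unfolding primitive_rank2_def
  proof (intro exI[of _ f] conjI)
    show "\<forall>i. f i \<in> int_vecs"
      unfolding int_vecs_def forall_4 by (simp add: f_def v4_def forall_4)
    define X where "X = k2*(s3*t4 - s4*t3) - k3*(s2*t4 - s4*t2) + k4*(s2*t3 - s3*t2)"
    have dX: "det (\<chi> i. f i) = of_int X"
      unfolding X_def by (simp add: det_4e f_def v4_def) (simp add: algebra_simps)
    have "X = 1 \<or> X = -1" using st unfolding X_def .
    then have "\<bar>(of_int X :: real)\<bar> = 1" by auto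
    then show "\<bar>det (\<chi> i. f i)\<bar> = 1" using dX by simp
    show "\<Gamma> = {of_int a *\<^sub>R f 1 + of_int b *\<^sub>R f 2 | a b. True}" by (simp add: \<Gamma>_def)
  qed
  define S where "S = {x *\<^sub>R f 1 + y *\<^sub>R f 2 | x y. True}"
  have subS: "subspace S"
    unfolding subspace_def S_def
  proof (intro conjI ballI allI)
    show "0 \<in> {x *\<^sub>R f 1 + y *\<^sub>R f 2 |x y. True}" by (rule CollectI, rule exI[of _ 0], rule exI[of _ 0]) simp
  next
    fix u v assume "u \<in> {x *\<^sub>R f 1 + y *\<^sub>R f 2 |x y. True}" "v \<in> {x *\<^sub>R f 1 + y *\<^sub>R f 2 |x y. True}"
    then obtain x1 y1 x2 y2 where "u = x1 *\<^sub>R f 1 + y1 *\<^sub>R f 2" "v = x2 *\<^sub>R f 1 + y2 *\<^sub>R f 2" by blast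
    then show "u + v \<in> {x *\<^sub>R f 1 + y *\<^sub>R f 2 |x y. True}"
      by (intro CollectI exI[of _ "x1+x2"] exI[of _ "y1+y2"]) (simp add: algebra_simps)
  next
    fix c u assume "u \<in> {x *\<^sub>R f 1 + y *\<^sub>R f 2 |x y. True}"
    then obtain x1 y1 where "u = x1 *\<^sub>R f 1 + y1 *\<^sub>R f 2" by blast
    then show "c *\<^sub>R u \<in> {x *\<^sub>R f 1 + y *\<^sub>R f 2 |x y. True}"
      by (intro CollectI exI[of _ "c*x1"] exI[of _ "c*y1"]) (simp add: algebra_simps)
  qed
  have "\<Gamma> \<subseteq> S" unfolding \<Gamma>_def S_def by blast
  then have spS: "span \<Gamma> \<subseteq> S" using subS span_minimal by blast
  have a12: "bilin \<alpha>' (f 1) (f 2) = 0" using ka by (simp add: bilin_def inner4 mvmult4 f_def v4_def)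
  have b12: "bilin \<beta>' (f 1) (f 2) = 0" using kb by (simp add: bilin_def inner4 mvmult4 f_def v4_def)
  have iso: "bilin M u v = 0" if sM: "transpose M = - M" and eM: "M = c1 *\<^sub>R \<alpha> + c2 *\<^sub>R \<beta>"
     and u: "u \<in> S" and v: "v \<in> S" for M u v c1 c2
  proof -
    have "2 *\<^sub>R M = M - transpose M" using sM by (simp add: scaleR_2)
    also have "\<dots> = c1 *\<^sub>R \<alpha>' + c2 *\<^sub>R \<beta>'"
      unfolding \<alpha>'_def \<beta>'_def using eM transpose_lin[of c1 \<alpha> c2 \<beta>] by (simp add: algebra_simps)
    finally have "2 *\<^sub>R M = c1 *\<^sub>R \<alpha>' + c2 *\<^sub>R \<beta>'" .
    then have "bilin (2 *\<^sub>R M) (f 1) (f 2) = 0" by (simp add: bilin_addM bilin_scaleM a12 b12)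
    then have m12: "bilin M (f 1) (f 2) = 0" by (simp add: bilin_scaleM)
    have m21: "bilin M (f 2) (f 1) = 0" using bilin_skew[OF sM, of "f 2" "f 1"] m12 by simp
    have m11: "bilin M x x = 0" for x using bilin_skew[OF sM, of x x] by simp
    obtain x1 y1 where "u = x1 *\<^sub>R f 1 + y1 *\<^sub>R f 2" using u unfolding S_def by blast
    moreover obtain x2 y2 where "v = x2 *\<^sub>R f 1 + y2 *\<^sub>R f 2" using v unfolding S_def by blast
    ultimately show ?thesis by (simp add: bilin_lin m12 m21 m11)
  qed
  show ?thesis
    using prim iso[OF sO eO] iso[OF sB eB] spS by blast
qed


theorem theorem4p6:
  fixes G B I :: "real^4^4"
  assumes G_sym: "transpose G = G"
    and G_pos: "\<forall>u. u \<noteq> 0 \<longrightarrow> bilin G u u > 0"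
    and B_anti: "transpose B = - B"
    and G_rat: "\<forall>i j. G $ i $ j \<in> \<rat>"
    and B_rat: "\<forall>i j. B $ i $ j \<in> \<rat>"
    and I_cplx: "I ** I = - mat 1"
    and I_compat: "compatible G I"
    and I_pol: "polarizable I"
    and B_20: "\<forall>u v. hodge20 (bilin B) I u v = 0"
  shows "\<exists>\<Gamma>f. primitive_rank2 \<Gamma>f \<and>
           (\<forall>u \<in> span \<Gamma>f. \<forall>v \<in> span \<Gamma>f. bilin (kahler G I) u v = 0 \<and> bilin B u v = 0)"
proof -
  obtain \<alpha> \<beta> a1 a2 b1 b2 where qa: "Qm \<alpha>" and qb: "Qm \<beta>"
    and eO: "kahler G I = a1 *\<^sub>R \<alpha> + a2 *\<^sub>R \<beta>" and eB: "B = b1 *\<^sub>R \<alpha> + b2 *\<^sub>R \<beta>"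
    using core[OF G_sym G_pos B_anti G_rat B_rat I_cplx I_compat I_pol B_20] by blast
  have GI: "transpose I ** G ** I = G"
    using I_compat unfolding compatible_def by (intro bilin_eq_mat) (simp add: bilin_conj)
  have IGm: "transpose I ** G = - (G ** I)" using inv_conj[OF GI I_cplx] .
  have tn: "transpose (- M) = - transpose M" for M :: "real^4^4"
    by (simp add: vec_eq_iff transpose_def)
  have tGI: "transpose (G ** I) = transpose I ** G" by (simp add: matrix_transpose_mul G_sym)
  have sK: "transpose (kahler G I) = - kahler G I"
    unfolding kahler_def IGm tn tGI by simp
  show ?thesis using lattice[OF qa qb sK B_anti eO eB] .
qed

end
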